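(* Let $(\vdash,\overline{\cdot},\widehat{\cdot})$ be a setting satisfying Pre-Relevance, and let $\mathcal{S},\mathcal{S}'\subseteq\mathcal{L}$ with $\mathcal{S}\mid\mathcal{S}'$. If $\mathcal{E}$ is a complete extension of $\mathcal{AF}_{\vdash}(\mathcal{S})$ and $\mathcal{E}'$ is a complete extension of $\mathcal{AF}_{\vdash}(\mathcal{S}')$, then $\mathcal{E}\cup\mathcal{E}'$ is an admissible set of $\mathcal{AF}_{\vdash}(\mathcal{S}\cup\mathcal{S}')$.
   Context: $\mathcal{L}$ is the set of formulas of a language built from propositional atoms; $\mathsf{Atoms}(\mathcal{S})$ is the set of atoms occurring in $\mathcal{S}$, and $\mathcal{S}_1\mid\mathcal{S}_2$ means $\mathsf{Atoms}(\mathcal{S}_1)\cap\mathsf{Atoms}(\mathcal{S}_2)=\emptyset$. A setting is $(\vdash,\overline{\cdot},\widehat{\cdot})$ with ${\vdash}\subseteq\wp_{\sf fin}(\mathcal{L})\times\mathcal{L}$ arbitrary, $\overline{\cdot}:\mathcal{L}\to\wp(\mathcal{L})$, $\widehat{\cdot}$ assigning to each nonempty finite set a finite set of formulas, with $\widehat{\emptyset}=\emptyset$. $\mathit{Arg}_{\vdash}(\mathcal{S})=\{(\Gamma,\gamma):\Gamma\subseteq\mathcal{S}\text{ finite},\Gamma\vdash\gamma\}$; $\mathcal{AF}_{\vdash}(\mathcal{S})$ is the attack graph on it where $(\Gamma,\gamma)$ attacks $(\Gamma',\gamma')$ iff $\gamma\in\overline{\phi}$ for some $\phi\in\widehat{\Gamma'}$.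 Admissible = conflict-free and every attacker (in the framework) of a member is attacked by a member; complete = admissible and contains every argument it defends. Pre-Relevance of the setting: (a) for all $\mathcal{S}_1,\mathcal{S}_2,\phi$ with $\mathcal{S}_1\cup\{\phi\}\mid\mathcal{S}_2$, $\mathcal{S}_1\cup\mathcal{S}_2\vdash\phi$ implies $\mathcal{S}_1'\vdash\phi$ for some $\mathcal{S}_1'\subseteq\mathcal{S}_1$; (b) primeness: for all sets of atoms $\mathcal{A}_1\mid\mathcal{A}_2$, all finite $\mathcal{S}_1,\mathcal{T}_1,\mathcal{S}_2,\mathcal{T}_2$ with $\mathsf{Atoms}(\mathcal{S}_i),\mathsf{Atoms}(\mathcal{T}_i)\subseteq\mathcal{A}_i$, and all $\phi,\psi$ with $\psi\in\overline{\phi}$, $\phi\in\widehat{\mathcal{T}_1\cup\mathcal{T}_2}$: if $\mathcal{S}_1\cup\mathcal{S}_2\vdash\psi$ then there are $i\in\{1,2\}$, $\mathcal{S}_i'\subseteq\mathcal{S}_i$, $\phi_i\in\widehat{\mathcal{T}_i}$, $\psi_i\in\overline{\phi_i}$ with $\mathcal{S}_i'\vdash\psi_i$; (c) $\widehat{\Delta}\subseteq\widehat{\Delta\cup\Delta'}$ for all finite $\Delta,\Delta'$. *)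

theory Defs
  imports Main
begin

definition Atoms :: "('f \<Rightarrow> 'a set) \<Rightarrow> 'f set \<Rightarrow> 'a set" where
  "Atoms atoms S = (\<Union>x\<in>S. atoms x)"

definition indep :: "('f \<Rightarrow> 'a set) \<Rightarrow> 'f set \<Rightarrow> 'f set \<Rightarrow> bool" where
  "indep atoms S1 S2 \<longleftrightarrow> Atoms atoms S1 \<inter> Atoms atoms S2 = {}"

definition setting :: "('f set \<Rightarrow> 'f \<Rightarrow> bool) \<Rightarrow> ('f \<Rightarrow> 'f set) \<Rightarrow> ('f set \<Rightarrow> 'f set) \<Rightarrow> bool" where
  "setting vd ov ha \<longleftrightarrow>
     (\<forall>\<Gamma> \<gamma>. vd \<Gamma> \<gamma> \<longrightarrow> finite \<Gamma>) \<and>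
     (\<forall>\<Delta>. finite \<Delta> \<longrightarrow> finite (ha \<Delta>)) \<and> ha {} = {}"

definition Arg :: "('f set \<Rightarrow> 'f \<Rightarrow> bool) \<Rightarrow> 'f set \<Rightarrow> ('f set \<times> 'f) set" where
  "Arg vd S = {(\<Gamma>, \<gamma>). finite \<Gamma> \<and> \<Gamma> \<subseteq> S \<and> vd \<Gamma> \<gamma>}"

definition attacks :: "('f \<Rightarrow> 'f set) \<Rightarrow> ('f set \<Rightarrow> 'f set) \<Rightarrow> ('f set \<times> 'f) \<Rightarrow> ('f set \<times> 'f) \<Rightarrow> bool" where
  "attacks ov ha a b \<longleftrightarrow> (\<exists>\<phi>\<in>ha (fst b). snd a \<in> ov \<phi>)"

definition conflict_free :: "('f \<Rightarrow> 'f set) \<Rightarrow> ('f set \<Rightarrow> 'f set) \<Rightarrow> ('f set \<times> 'f) set \<Rightarrow> bool" where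
  "conflict_free ov ha E \<longleftrightarrow> (\<forall>a\<in>E. \<forall>b\<in>E. \<not> attacks ov ha a b)"

definition defends :: "('f \<Rightarrow> 'f set) \<Rightarrow> ('f set \<Rightarrow> 'f set) \<Rightarrow> ('f set \<times> 'f) set \<Rightarrow> ('f set \<times> 'f) set \<Rightarrow> ('f set \<times> 'f) \<Rightarrow> bool" where
  "defends ov ha Args E a \<longleftrightarrow> (\<forall>b\<in>Args. attacks ov ha b a \<longrightarrow> (\<exists>c\<in>E. attacks ov ha c b))"

definition admissible :: "('f set \<Rightarrow> 'f \<Rightarrow> bool) \<Rightarrow> ('f \<Rightarrow> 'f set) \<Rightarrow> ('f set \<Rightarrow> 'f set) \<Rightarrow> 'f set \<Rightarrow> ('f set \<times> 'f) set \<Rightarrow> bool" where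
  "admissible vd ov ha S E \<longleftrightarrow> E \<subseteq> Arg vd S \<and> conflict_free ov ha E \<and>
     (\<forall>a\<in>E. defends ov ha (Arg vd S) E a)"

definition complete :: "('f set \<Rightarrow> 'f \<Rightarrow> bool) \<Rightarrow> ('f \<Rightarrow> 'f set) \<Rightarrow> ('f set \<Rightarrow> 'f set) \<Rightarrow> 'f set \<Rightarrow> ('f set \<times> 'f) set \<Rightarrow> bool" where
  "complete vd ov ha S E \<longleftrightarrow> admissible vd ov ha S E \<and>
     (\<forall>a\<in>Arg vd S. defends ov ha (Arg vd S) E a \<longrightarrow> a \<in> E)"

definition pre_relevance :: "('f \<Rightarrow> 'a set) \<Rightarrow> ('f set \<Rightarrow> 'f \<Rightarrow> bool) \<Rightarrow> ('f \<Rightarrow> 'f set) \<Rightarrow> ('f set \<Rightarrow> 'f set) \<Rightarrow> bool" where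
  "pre_relevance atoms vd ov ha \<longleftrightarrow>
    (\<forall>S1 S2 \<phi>. indep atoms (S1 \<union> {\<phi>}) S2 \<longrightarrow> vd (S1 \<union> S2) \<phi> \<longrightarrow>
        (\<exists>S1'. S1' \<subseteq> S1 \<and> vd S1' \<phi>)) \<and>
    (\<forall>A1 A2 S1 T1 S2 T2 \<phi> \<psi>. A1 \<inter> A2 = {} \<longrightarrow>
        finite S1 \<longrightarrow> finite T1 \<longrightarrow> finite S2 \<longrightarrow> finite T2 \<longrightarrow>
        Atoms atoms S1 \<subseteq> A1 \<longrightarrow> Atoms atoms T1 \<subseteq> A1 \<longrightarrow>
        Atoms atoms S2 \<subseteq> A2 \<longrightarrow> Atoms atoms T2 \<subseteq> A2 \<longrightarrow>
        \<psi> \<in> ov \<phi> \<longrightarrow> \<phi> \<in> ha (T1 \<union> T2) \<longrightarrow> vd (S1 \<union> S2) \<psi> \<longrightarrow>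
        ((\<exists>S1' \<phi>1 \<psi>1. S1' \<subseteq> S1 \<and> \<phi>1 \<in> ha T1 \<and> \<psi>1 \<in> ov \<phi>1 \<and> vd S1' \<psi>1) \<or>
         (\<exists>S2' \<phi>2 \<psi>2. S2' \<subseteq> S2 \<and> \<phi>2 \<in> ha T2 \<and> \<psi>2 \<in> ov \<phi>2 \<and> vd S2' \<psi>2))) \<and>
    (\<forall>\<Delta> \<Delta>'. finite \<Delta> \<longrightarrow> finite \<Delta>' \<longrightarrow> ha \<Delta> \<subseteq> ha (\<Delta> \<union> \<Delta>'))"

end

theory Submission
  imports Defs
begin

lemma prime_rule:
  assumes "pre_relevance atoms vd ov ha"
    and "A1 \<inter> A2 = {}" "finite S1" "finite T1" "finite S2" "finite T2"
    "Atoms atoms S1 \<subseteq> A1" "Atoms atoms T1 \<subseteq> A1"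
    "Atoms atoms S2 \<subseteq> A2" "Atoms atoms T2 \<subseteq> A2"
    "\<psi> \<in> ov \<phi>" "\<phi> \<in> ha (T1 \<union> T2)" "vd (S1 \<union> S2) \<psi>"
  shows "(\<exists>S1' \<phi>1 \<psi>1. S1' \<subseteq> S1 \<and> \<phi>1 \<in> ha T1 \<and> \<psi>1 \<in> ov \<phi>1 \<and> vd S1' \<psi>1) \<or>
         (\<exists>S2' \<phi>2 \<psi>2. S2' \<subseteq> S2 \<and> \<phi>2 \<in> ha T2 \<and> \<psi>2 \<in> ov \<phi>2 \<and> vd S2' \<psi>2)"
proof -
  from assms(1) have P: "\<forall>A1 A2 S1 T1 S2 T2 \<phi> \<psi>. A1 \<inter> A2 = {} \<longrightarrow>
        finite S1 \<longrightarrow> finite T1 \<longrightarrow> finite S2 \<longrightarrow> finite T2 \<longrightarrow>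
        Atoms atoms S1 \<subseteq> A1 \<longrightarrow> Atoms atoms T1 \<subseteq> A1 \<longrightarrow>
        Atoms atoms S2 \<subseteq> A2 \<longrightarrow> Atoms atoms T2 \<subseteq> A2 \<longrightarrow>
        \<psi> \<in> ov \<phi> \<longrightarrow> \<phi> \<in> ha (T1 \<union> T2) \<longrightarrow> vd (S1 \<union> S2) \<psi> \<longrightarrow>
        ((\<exists>S1' \<phi>1 \<psi>1. S1' \<subseteq> S1 \<and> \<phi>1 \<in> ha T1 \<and> \<psi>1 \<in> ov \<phi>1 \<and> vd S1' \<psi>1) \<or>
         (\<exists>S2' \<phi>2 \<psi>2. S2' \<subseteq> S2 \<and> \<phi>2 \<in> ha T2 \<and> \<psi>2 \<in> ov \<phi>2 \<and> vd S2' \<psi>2))"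
    unfolding pre_relevance_def by (rule conjunct1[OF conjunct2])
  show ?thesis by (rule P[rule_format, OF assms(2-13)])
qed

lemma mono_rule:
  assumes "pre_relevance atoms vd ov ha" "finite D" "finite D'"
  shows "ha D \<subseteq> ha (D \<union> D')"
proof -
  from assms(1) have P: "\<forall>\<Delta> \<Delta>'. finite \<Delta> \<longrightarrow> finite \<Delta>' \<longrightarrow> ha \<Delta> \<subseteq> ha (\<Delta> \<union> \<Delta>')"
    unfolding pre_relevance_def by (rule conjunct2[OF conjunct2])
  show ?thesis by (rule P[rule_format, OF assms(2-3)])
qed

lemma Atoms_mono: "A \<subseteq> B \<Longrightarrow> Atoms atoms A \<subseteq> Atoms atoms B"
  unfolding Atoms_def by blast

theorem lemma3:
  fixes atoms :: "'f \<Rightarrow> 'a set"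
    and vd :: "'f set \<Rightarrow> 'f \<Rightarrow> bool"
    and ov :: "'f \<Rightarrow> 'f set"
    and ha :: "'f set \<Rightarrow> 'f set"
    and S S' :: "'f set"
    and E E' :: "('f set \<times> 'f) set"
  assumes set: "setting vd ov ha"
    and pr: "pre_relevance atoms vd ov ha"
    and ind: "indep atoms S S'"
    and cE: "complete vd ov ha S E"
    and cE': "complete vd ov ha S' E'"
  shows "admissible vd ov ha (S \<union> S') (E \<union> E')"
proof -
  have fin: "\<And>G g. vd G g \<Longrightarrow> finite G" and he: "ha {} = {}"
    using set unfolding setting_def by auto
  have disj: "Atoms atoms S \<inter> Atoms atoms S' = {}" using ind unfolding indep_def .
  have sE: "E \<subseteq> Arg vd S" and cfE: "conflict_free ov ha E"
    and dE: "\<And>a. a \<in> E \<Longrightarrow> defends ov ha (Arg vd S) E a"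
    using cE unfolding complete_def admissible_def by auto
  have sE': "E' \<subseteq> Arg vd S'" and cfE': "conflict_free ov ha E'"
    and dE': "\<And>a. a \<in> E' \<Longrightarrow> defends ov ha (Arg vd S') E' a"
    using cE' unfolding complete_def admissible_def by auto
  have ArgS: "Arg vd S \<subseteq> Arg vd (S \<union> S')" "Arg vd S' \<subseteq> Arg vd (S \<union> S')"
    unfolding Arg_def by auto
  have noEE': False if h: "a \<in> E" "b \<in> E'" "attacks ov ha a b" for a b
  proof -
    obtain G g where a: "a = (G, g)" by fastforce
    obtain D d where b: "b = (D, d)" by fastforce
    have aA: "finite G" "G \<subseteq> S" "vd G g" using h(1) sE a unfolding Arg_def by auto
    have bA: "finite D" "D \<subseteq> S'" "vd D d" using h(2) sE' b unfolding Arg_def by auto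
    obtain \<phi> where ph: "\<phi> \<in> ha D" "g \<in> ov \<phi>" using h(3) a b unfolding attacks_def by auto
    have "(\<exists>S1' \<phi>1 \<psi>1. S1' \<subseteq> G \<and> \<phi>1 \<in> ha {} \<and> \<psi>1 \<in> ov \<phi>1 \<and> vd S1' \<psi>1) \<or>
         (\<exists>S2' \<phi>2 \<psi>2. S2' \<subseteq> {} \<and> \<phi>2 \<in> ha D \<and> \<psi>2 \<in> ov \<phi>2 \<and> vd S2' \<psi>2)"
      apply (rule prime_rule[OF pr disj aA(1) finite.emptyI finite.emptyI bA(1)
            Atoms_mono[OF aA(2)] _ _ Atoms_mono[OF bA(2)] ph(2)])
      using ph(1) aA(3) by (simp_all add: Atoms_def)
    then obtain \<phi>2 \<psi>2 where q: "\<phi>2 \<in> ha D" "\<psi>2 \<in> ov \<phi>2" "vd {} \<psi>2" using he by auto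
    have "({}, \<psi>2) \<in> Arg vd S'" using q unfolding Arg_def by auto
    moreover have "attacks ov ha ({}, \<psi>2) b" using q b unfolding attacks_def by auto
    ultimately obtain c where "c \<in> E'" "attacks ov ha c ({}, \<psi>2)"
      using dE'[OF h(2)] unfolding defends_def by blast
    then show False using he unfolding attacks_def by auto
  qed
  have noE'E: False if h: "a \<in> E'" "b \<in> E" "attacks ov ha a b" for a b
  proof -
    obtain G g where a: "a = (G, g)" by fastforce
    obtain D d where b: "b = (D, d)" by fastforce
    have aA: "finite G" "G \<subseteq> S'" "vd G g" using h(1) sE' a unfolding Arg_def by auto
    have bA: "finite D" "D \<subseteq> S" "vd D d" using h(2) sE b unfolding Arg_def by auto
    obtain \<phi> where ph: "\<phi> \<in> ha D" "g \<in> ov \<phi>" using h(3) a b unfolding attacks_def by auto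
    have "(\<exists>S1' \<phi>1 \<psi>1. S1' \<subseteq> {} \<and> \<phi>1 \<in> ha D \<and> \<psi>1 \<in> ov \<phi>1 \<and> vd S1' \<psi>1) \<or>
         (\<exists>S2' \<phi>2 \<psi>2. S2' \<subseteq> G \<and> \<phi>2 \<in> ha {} \<and> \<psi>2 \<in> ov \<phi>2 \<and> vd S2' \<psi>2)"
      apply (rule prime_rule[OF pr disj finite.emptyI bA(1) aA(1) finite.emptyI
            _ Atoms_mono[OF bA(2)] Atoms_mono[OF aA(2)] _ ph(2)])
      using ph(1) aA(3) by (simp_all add: Atoms_def)
    then obtain \<phi>2 \<psi>2 where q: "\<phi>2 \<in> ha D" "\<psi>2 \<in> ov \<phi>2" "vd {} \<psi>2" using he by auto
    have "({}, \<psi>2) \<in> Arg vd S" using q unfolding Arg_def by auto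
    moreover have "attacks ov ha ({}, \<psi>2) b" using q b unfolding attacks_def by auto
    ultimately obtain c where "c \<in> E" "attacks ov ha c ({}, \<psi>2)"
      using dE[OF h(2)] unfolding defends_def by blast
    then show False using he unfolding attacks_def by auto
  qed
  have cf: "conflict_free ov ha (E \<union> E')"
    using cfE cfE' noEE' noE'E unfolding conflict_free_def by blast
  have defE: "\<exists>c\<in>E \<union> E'. attacks ov ha c b"
    if h: "a \<in> E" "b \<in> Arg vd (S \<union> S')" "attacks ov ha b a" for a b
  proof -
    obtain G g where a: "a = (G, g)" by fastforce
    obtain T t where b: "b = (T, t)" by fastforce
    have aA: "finite G" "G \<subseteq> S" "vd G g" using h(1) sE a unfolding Arg_def by auto
    have bA: "finite T" "T \<subseteq> S \<union> S'" "vd T t" using h(2) b unfolding Arg_def by auto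
    obtain \<phi> where ph: "\<phi> \<in> ha G" "t \<in> ov \<phi>" using h(3) a b unfolding attacks_def by auto
    have TT: "T = (T \<inter> S) \<union> (T - S)" by blast
    have "(\<exists>S1' \<phi>1 \<psi>1. S1' \<subseteq> T \<inter> S \<and> \<phi>1 \<in> ha G \<and> \<psi>1 \<in> ov \<phi>1 \<and> vd S1' \<psi>1) \<or>
         (\<exists>S2' \<phi>2 \<psi>2. S2' \<subseteq> T - S \<and> \<phi>2 \<in> ha {} \<and> \<psi>2 \<in> ov \<phi>2 \<and> vd S2' \<psi>2)"
      apply (rule prime_rule[OF pr disj _ aA(1) _ finite.emptyI
            Atoms_mono[of "T \<inter> S" S] Atoms_mono[OF aA(2)] Atoms_mono[of "T - S" S'] _ ph(2)])
      using ph(1) bA TT by (simp_all add: Atoms_def, blast+)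
    then obtain S1 \<phi>1 \<psi>1 where q: "S1 \<subseteq> T \<inter> S" "\<phi>1 \<in> ha G" "\<psi>1 \<in> ov \<phi>1" "vd S1 \<psi>1"
      using he by auto
    have f1: "finite S1" using fin q(4) .
    have "(S1, \<psi>1) \<in> Arg vd S" using q f1 unfolding Arg_def by auto
    moreover have "attacks ov ha (S1, \<psi>1) a" using q a unfolding attacks_def by auto
    ultimately obtain c where c: "c \<in> E" "attacks ov ha c (S1, \<psi>1)"
      using dE[OF h(1)] unfolding defends_def by blast
    have "ha S1 \<subseteq> ha (S1 \<union> T)" using mono_rule[OF pr f1 bA(1)] .
    moreover have "S1 \<union> T = T" using q by blast
    ultimately have "ha S1 \<subseteq> ha T" by simp
    then have "attacks ov ha c b" using c b unfolding attacks_def by auto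
    then show ?thesis using c by blast
  qed
  have defE': "\<exists>c\<in>E \<union> E'. attacks ov ha c b"
    if h: "a \<in> E'" "b \<in> Arg vd (S \<union> S')" "attacks ov ha b a" for a b
  proof -
    obtain G g where a: "a = (G, g)" by fastforce
    obtain T t where b: "b = (T, t)" by fastforce
    have aA: "finite G" "G \<subseteq> S'" "vd G g" using h(1) sE' a unfolding Arg_def by auto
    have bA: "finite T" "T \<subseteq> S \<union> S'" "vd T t" using h(2) b unfolding Arg_def by auto
    obtain \<phi> where ph: "\<phi> \<in> ha G" "t \<in> ov \<phi>" using h(3) a b unfolding attacks_def by auto
    have TT: "T = (T \<inter> S) \<union> (T - S)" by blast
    have "(\<exists>S1' \<phi>1 \<psi>1. S1' \<subseteq> T \<inter> S \<and> \<phi>1 \<in> ha {} \<and> \<psi>1 \<in> ov \<phi>1 \<and> vd S1' \<psi>1) \<or>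
         (\<exists>S2' \<phi>2 \<psi>2. S2' \<subseteq> T - S \<and> \<phi>2 \<in> ha G \<and> \<psi>2 \<in> ov \<phi>2 \<and> vd S2' \<psi>2)"
      apply (rule prime_rule[OF pr disj _ finite.emptyI _ aA(1)
            Atoms_mono[of "T \<inter> S" S] _ Atoms_mono[of "T - S" S'] Atoms_mono[OF aA(2)] ph(2)])
      using ph(1) bA TT by (simp_all add: Atoms_def, blast+)
    then obtain S1 \<phi>1 \<psi>1 where q: "S1 \<subseteq> T - S" "\<phi>1 \<in> ha G" "\<psi>1 \<in> ov \<phi>1" "vd S1 \<psi>1"
      using he by auto
    have f1: "finite S1" using fin q(4) .
    have "(S1, \<psi>1) \<in> Arg vd S'" using q f1 bA unfolding Arg_def by auto
    moreover have "attacks ov ha (S1, \<psi>1) a" using q a unfolding attacks_def by auto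
    ultimately obtain c where c: "c \<in> E'" "attacks ov ha c (S1, \<psi>1)"
      using dE'[OF h(1)] unfolding defends_def by blast
    have "ha S1 \<subseteq> ha (S1 \<union> T)" using mono_rule[OF pr f1 bA(1)] .
    moreover have "S1 \<union> T = T" using q by blast
    ultimately have "ha S1 \<subseteq> ha T" by simp
    then have "attacks ov ha c b" using c b unfolding attacks_def by auto
    then show ?thesis using c by blast
  qed
  have sub: "E \<union> E' \<subseteq> Arg vd (S \<union> S')"
    using subset_trans[OF sE ArgS(1)] subset_trans[OF sE' ArgS(2)] by (rule Un_least)
  have dd: "defends ov ha (Arg vd (S \<union> S')) (E \<union> E') a" if a: "a \<in> E \<union> E'" for a
    unfolding defends_def
  proof (intro ballI impI)
    fix b assume b: "b \<in> Arg vd (S \<union> S')" "attacks ov ha b a"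
    from a show "\<exists>c\<in>E \<union> E'. attacks ov ha c b"
    proof
      assume "a \<in> E" then show ?thesis using defE b by metis
    next
      assume "a \<in> E'" then show ?thesis using defE' b by metis
    qed
  qed
  have "\<forall>a\<in>E \<union> E'. defends ov ha (Arg vd (S \<union> S')) (E \<union> E') a" using dd by (rule ballI)
  then have ball: "Ball (E \<union> E') (defends ov ha (Arg vd (S \<union> S')) (E \<union> E'))" .
  show ?thesis unfolding admissible_def
    using conjI[OF sub conjI[OF cf ball]] .
qed

end
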